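(* Let $f_0,f_1\in \mathrm{PL}_0(\mathbf{I})$ satisfy $[f_1^{f_0},f_0f_1^{-1}]=1$ and $[f_0f_1^{-1},f_1^{f_0^2}]=1$. Let $A=(a,c)$ be an orbital of $f_0$ that is a down-bump, and suppose $(a,c)$ is not an orbital of $f_1$. Let $(b_1,d_1),(b_2,d_2),\dots,(b_n,d_n)$, with $n\ge1$, be all the orbitals of $f_1$ that meet $(a,c)$, in increasing order. Then: (i) $d_n<c$; (ii) there is a point $\rho>a$ such that $f_0|_{[a,\rho]}=f_1|_{[a,\rho]}$; (iii) $b_1=a$; (iv) if $\rho$ is the maximal point such that $f_0|_{[a,\rho]}=f_1|_{[a,\rho]}$, then $d_1f_0\le\rho$; (v) $d_nf_0<d_1$.
   Context: $\mathrm{PL}_0(\mathbf{I})$ is the group of orientation-preserving piecewise-linear homeomorphisms of $[0,1]$ with finitely many points of non-differentiability. Functions act on the right: $tf=f(t)$, $fg=g\circ f$, $a^b=b^{-1}ab$, $[a,b]=aba^{-1}b^{-1}$. The orbitals of $f$ are the connected components (open intervals) of $\operatorname{Supp}(f)=\{x: xf\ne x\}$; an orbital $A$ is a down-bump if $xf<x$ for all $x\in A$. Orbitals are ordered by $A<B$ if every point of $A$ is less than every point of $B$. *)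

theory Defs
  imports "HOL-Analysis.Analysis"
begin

text \<open>Elements of PL_0(I) are modelled as functions real => real that are the
identity outside [0,1] (so that composition and inverse are total and well-behaved).\<close>

definition PL0 :: "(real \<Rightarrow> real) \<Rightarrow> bool" where
  "PL0 f \<longleftrightarrow>
     (\<forall>x. x \<notin> {0..1} \<longrightarrow> f x = x) \<and> f 0 = 0 \<and> f 1 = 1 \<and>
     strict_mono_on {0..1} f \<and> continuous_on {0..1} f \<and>
     (\<exists>P. finite P \<and> {0,1} \<subseteq> P \<and> P \<subseteq> {0..1} \<and>
        (\<forall>u v. u \<in> P \<and> v \<in> P \<and> u < v \<and> {u<..<v} \<inter> P = {} \<longrightarrow>
           (\<exists>m k. \<forall>x\<in>{u..v}. f x = m * x + k)))"

text \<open>Right action: t(fg) = g(f(t)), i.e. fg = g o f.\<close>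
definition pmult :: "(real \<Rightarrow> real) \<Rightarrow> (real \<Rightarrow> real) \<Rightarrow> (real \<Rightarrow> real)" where
  "pmult f g = g \<circ> f"

definition pinv :: "(real \<Rightarrow> real) \<Rightarrow> (real \<Rightarrow> real)" where
  "pinv f = inv f"

definition pconj :: "(real \<Rightarrow> real) \<Rightarrow> (real \<Rightarrow> real) \<Rightarrow> (real \<Rightarrow> real)" where
  "pconj a b = pmult (pmult (pinv b) a) b"

definition pcomm :: "(real \<Rightarrow> real) \<Rightarrow> (real \<Rightarrow> real) \<Rightarrow> (real \<Rightarrow> real)" where
  "pcomm a b = pmult (pmult (pmult a b) (pinv a)) (pinv b)"

definition supp :: "(real \<Rightarrow> real) \<Rightarrow> real set" where
  "supp f = {x. f x \<noteq> x}"

definition orbital :: "(real \<Rightarrow> real) \<Rightarrow> real set \<Rightarrow> bool" where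
  "orbital f A \<longleftrightarrow> A \<in> components (supp f)"

definition down_bump :: "(real \<Rightarrow> real) \<Rightarrow> real set \<Rightarrow> bool" where
  "down_bump f A \<longleftrightarrow> orbital f A \<and> (\<forall>x\<in>A. f x < x)"

end

theory Submission
  imports Defs
begin


definition affon :: "(real \<Rightarrow> real) \<Rightarrow> real \<Rightarrow> real \<Rightarrow> bool" where
  "affon f s t \<longleftrightarrow> (\<exists>m k. \<forall>x. s \<le> x \<and> x \<le> t \<longrightarrow> f x = m*x + k)"

definition LA :: "(real \<Rightarrow> real) \<Rightarrow> bool" where
  "LA f \<longleftrightarrow> (\<forall>t. \<exists>e>0. affon f (t-e) t \<and> affon f t (t+e))"

definition good :: "(real \<Rightarrow> real) \<Rightarrow> bool" where
  "good f \<longleftrightarrow> strict_mono f \<and> surj f \<and> (\<forall>x. (x \<le> 0 \<or> 1 \<le> x) \<longrightarrow> f x = x) \<and> LA f"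

lemma affon_mono: "affon f s t \<Longrightarrow> s \<le> s' \<Longrightarrow> t' \<le> t \<Longrightarrow> affon f s' t'"
  unfolding affon_def by force

lemma affon_comp: "strict_mono f \<Longrightarrow> affon f s t \<Longrightarrow> affon g (f s) (f t) \<Longrightarrow> affon (g \<circ> f) s t"
proof -
  assume sm: "strict_mono f" and a1: "affon f s t" and a2: "affon g (f s) (f t)"
  from a1 obtain m k where h1: "\<forall>x. s \<le> x \<and> x \<le> t \<longrightarrow> f x = m*x + k" unfolding affon_def by auto
  from a2 obtain m' k' where h2: "\<forall>x. f s \<le> x \<and> x \<le> f t \<longrightarrow> g x = m'*x + k'" unfolding affon_def by auto
  have "\<forall>x. s \<le> x \<and> x \<le> t \<longrightarrow> (g \<circ> f) x = (m'*m)*x + (m'*k+k')"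
  proof (intro allI impI)
    fix x assume x: "s \<le> x \<and> x \<le> t"
    have "f s \<le> f x" "f x \<le> f t" using x sm by (auto simp: strict_mono_less_eq)
    then have "g (f x) = m' * f x + k'" using h2 by auto
    also have "\<dots> = (m'*m)*x + (m'*k+k')" using h1 x by (simp add: algebra_simps)
    finally show "(g \<circ> f) x = (m'*m)*x + (m'*k+k')" by simp
  qed
  then show ?thesis unfolding affon_def by blast
qed

lemma affon_slope:
  fixes f :: "real \<Rightarrow> real"
  assumes sm: "strict_mono f" and st: "s < t" and h: "\<forall>x. s \<le> x \<and> x \<le> t \<longrightarrow> f x = m*x + k"
  shows "m > 0"
proof -
  have "f s < f t" using sm st by (simp add: strict_monoD)
  then have "m * s + k < m * t + k" using h st by auto
  then have "m * s < m * t" by linarith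
  then have "m * (t - s) > 0" by (simp add: algebra_simps)
  then show ?thesis using st by (simp add: zero_less_mult_iff)
qed

lemma affon_inv:
  assumes sm: "strict_mono f" and su: "surj f" and a: "affon f s t" and st: "s < t"
  shows "affon (inv f) (f s) (f t)"
proof -
  from a obtain m k where h: "\<forall>x. s \<le> x \<and> x \<le> t \<longrightarrow> f x = m*x + k" unfolding affon_def by auto
  have m: "m > 0" using affon_slope[OF sm st h] .
  have "\<forall>y. f s \<le> y \<and> y \<le> f t \<longrightarrow> inv f y = (1/m)*y + (-k/m)"
  proof (intro allI impI)
    fix y assume y: "f s \<le> y \<and> y \<le> f t"
    have fy: "f (inv f y) = y" using su by (simp add: surj_f_inv_f)
    have a1: "f s \<le> f (inv f y)" "f (inv f y) \<le> f t" using y fy by simp_all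
    have "s \<le> inv f y" "inv f y \<le> t" using a1 strict_mono_less_eq[OF sm] by blast+
    then have "y = m * inv f y + k" using h fy by auto
    then show "inv f y = (1/m)*y + (-k/m)" using m by (simp add: field_simps)
  qed
  then show ?thesis unfolding affon_def by blast
qed

lemma good_inj: "good f \<Longrightarrow> inj f"
  unfolding good_def by (simp add: strict_mono_imp_inj_on)

lemma good_bij: "good f \<Longrightarrow> bij f"
  unfolding good_def bij_def by (simp add: strict_mono_imp_inj_on)

lemma good_inv_f: "good f \<Longrightarrow> inv f (f x) = x"
  using good_inj by (simp add: inv_f_f)

lemma good_f_inv: "good f \<Longrightarrow> f (inv f x) = x"
  unfolding good_def by (simp add: surj_f_inv_f)

lemma good_less: "good f \<Longrightarrow> (f x < f y) = (x < y)"
  unfolding good_def by (simp add: strict_mono_less)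

lemma good_le: "good f \<Longrightarrow> (f x \<le> f y) = (x \<le> y)"
  unfolding good_def by (simp add: strict_mono_less_eq)

lemma good_eq: "good f \<Longrightarrow> (f x = f y) = (x = y)"
  using good_inj by (metis injD)

lemma good_out: "good f \<Longrightarrow> x \<le> 0 \<or> 1 \<le> x \<Longrightarrow> f x = x"
  unfolding good_def by auto

lemma good_comp:
  assumes f: "good f" and g: "good g" shows "good (g \<circ> f)"
proof -
  have smf: "strict_mono f" and smg: "strict_mono g" using f g unfolding good_def by auto
  have sm: "strict_mono (g \<circ> f)" using smf smg by (simp add: strict_mono_def)
  have su: "surj (g \<circ> f)" using f g unfolding good_def using comp_surj by blast
  have out: "\<forall>x. (x \<le> 0 \<or> 1 \<le> x) \<longrightarrow> (g \<circ> f) x = x" using f g unfolding good_def by auto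
  have la: "LA (g \<circ> f)" unfolding LA_def
  proof
    fix t
    obtain e1 where e1: "e1 > 0" "affon f (t-e1) t" "affon f t (t+e1)" using f unfolding good_def LA_def by blast
    obtain e2 where e2: "e2 > 0" "affon g (f t - e2) (f t)" "affon g (f t) (f t+e2)" using g unfolding good_def LA_def by blast
    obtain m k where hl: "\<forall>x. t-e1 \<le> x \<and> x \<le> t \<longrightarrow> f x = m*x + k" using e1(2) unfolding affon_def by auto
    obtain m' k' where hr: "\<forall>x. t \<le> x \<and> x \<le> t+e1 \<longrightarrow> f x = m'*x + k'" using e1(3) unfolding affon_def by auto
    have m: "m > 0" using affon_slope[OF smf _ hl] e1 by simp
    have m': "m' > 0" using affon_slope[OF smf _ hr] e1 by simp
    define e where "e = min e1 (min (e2/m) (e2/m'))"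
    have e: "e > 0" using e1 e2 m m' by (simp add: e_def)
    have l1: "affon f (t-e) t" using e1(2) by (rule affon_mono) (auto simp: e_def)
    have r1: "affon f t (t+e) " using e1(3) by (rule affon_mono) (auto simp: e_def)
    have "f (t-e) = m*(t-e) + k" "f t = m*t+k" using hl e by (auto simp: e_def)
    then have "f t - f (t-e) = m*e" by (simp add: algebra_simps)
    also have "\<dots> \<le> m*(e2/m)" using m by (intro mult_left_mono) (auto simp: e_def)
    finally have "f (t-e) \<ge> f t - e2" using m by simp
    then have l2: "affon g (f (t-e)) (f t)" by (intro affon_mono[OF e2(2)]) auto
    have "f (t+e) = m'*(t+e) + k'" "f t = m'*t+k'" using hr e by (auto simp: e_def)
    then have "f (t+e) - f t = m'*e" by (simp add: algebra_simps)
    also have "\<dots> \<le> m'*(e2/m')" using m' by (intro mult_left_mono) (auto simp: e_def)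
    finally have "f (t+e) \<le> f t + e2" using m' by simp
    then have r2: "affon g (f t) (f (t+e))" by (intro affon_mono[OF e2(3)]) auto
    show "\<exists>e>0. affon (g \<circ> f) (t - e) t \<and> affon (g \<circ> f) t (t + e)"
      using e affon_comp[OF smf l1 l2] affon_comp[OF smf r1 r2] by blast
  qed
  show ?thesis unfolding good_def using sm su out la by blast
qed

lemma good_inv:
  assumes f: "good f" shows "good (inv f)"
proof -
  have smf: "strict_mono f" and suf: "surj f" using f unfolding good_def by auto
  have sm: "strict_mono (inv f)"
  proof (rule strict_monoI)
    fix x y :: real assume "x < y"
    show "inv f x < inv f y"
    proof (rule ccontr)
      assume "\<not> inv f x < inv f y"
      then have "inv f y \<le> inv f x" by simp
      then have "f (inv f y) \<le> f (inv f x)" using f by (simp add: good_le)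
      then show False using \<open>x < y\<close> f by (simp add: good_f_inv)
    qed
  qed
  have su: "surj (inv f)"
  proof (rule surjI)
    fix x show "inv f (f x) = x" using f by (rule good_inv_f)
  qed
  have out: "\<forall>x. (x \<le> 0 \<or> 1 \<le> x) \<longrightarrow> inv f x = x"
  proof (intro allI impI)
    fix x :: real assume "x \<le> 0 \<or> 1 \<le> x"
    then have "f x = x" using good_out[OF f] by blast
    then have "inv f (f x) = inv f x" by simp
    then show "inv f x = x" using f by (simp add: good_inv_f)
  qed
  have la: "LA (inv f)" unfolding LA_def
  proof
    fix s
    define t where "t = inv f s"
    have ft: "f t = s" using f by (simp add: t_def good_f_inv)
    obtain e1 where e1: "e1 > 0" "affon f (t-e1) t" "affon f t (t+e1)" using f unfolding good_def LA_def by blast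
    have "f (t-e1) < s" "s < f (t+e1)" using ft e1(1) smf by (auto simp: strict_monoD)
    define e where "e = min (s - f (t-e1)) (f (t+e1) - s)"
    have e: "e > 0" using \<open>f (t-e1) < s\<close> \<open>s < f (t+e1)\<close> by (simp add: e_def)
    have "affon (inv f) (f (t-e1)) (f t)" using affon_inv[OF smf suf e1(2)] e1 by simp
    then have l: "affon (inv f) (s-e) s" by (rule affon_mono) (auto simp: e_def ft)
    have "affon (inv f) (f t) (f (t+e1))" using affon_inv[OF smf suf e1(3)] e1 by simp
    then have r: "affon (inv f) s (s+e)" by (rule affon_mono) (auto simp: e_def ft)
    show "\<exists>e>0. affon (inv f) (s - e) s \<and> affon (inv f) s (s + e)" using e l r by blast
  qed
  show ?thesis unfolding good_def using sm su out la by blast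
qed

lemma affon_cont: "affon f s t \<Longrightarrow> continuous_on {s..t} f"
proof -
  assume "affon f s t"
  then obtain m k where h: "\<forall>x. s \<le> x \<and> x \<le> t \<longrightarrow> f x = m*x + k" unfolding affon_def by auto
  have "continuous_on {s..t} (\<lambda>x. m*x+k)" by (intro continuous_intros)
  then show ?thesis by (rule continuous_on_eq) (use h in auto)
qed

lemma good_isCont: "good f \<Longrightarrow> isCont f t"
proof -
  assume f: "good f"
  obtain e where e: "e > 0" "affon f (t-e) t" "affon f t (t+e)" using f unfolding good_def LA_def by blast
  have "continuous_on ({t-e..t} \<union> {t..t+e}) f"
    by (intro continuous_on_closed_Un affon_cont e) auto
  moreover have "{t-e..t} \<union> {t..t+e} = {t-e..t+e}" using e by auto
  ultimately have "continuous_on {t-e..t+e} f" by simp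
  moreover have "t \<in> interior {t-e..t+e}" using e by auto
  ultimately show ?thesis using continuous_on_interior by blast
qed

lemma good_cont: "good f \<Longrightarrow> continuous_on UNIV f"
  by (simp add: continuous_at_imp_continuous_on good_isCont)



definition orb :: "(real \<Rightarrow> real) \<Rightarrow> real \<Rightarrow> real \<Rightarrow> bool" where
  "orb k p q \<longleftrightarrow> p < q \<and> k p = p \<and> k q = q \<and> (\<forall>x. p < x \<and> x < q \<longrightarrow> k x \<noteq> x)"

lemma orb_inv: "good k \<Longrightarrow> orb k p q \<Longrightarrow> orb (inv k) p q"
  unfolding orb_def by (metis good_f_inv good_inv_f)

lemma iter_range:
  assumes k: "good k" and o: "orb k p q" and x: "p < x" "x < q"
  shows "p < (k^^m) x \<and> (k^^m) x < q"
proof (induction m)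
  case 0 then show ?case using x by simp
next
  case (Suc m)
  have "k p < k ((k^^m) x)" "k ((k^^m) x) < k q" using Suc k by (auto simp: good_less)
  then show ?case using o unfolding orb_def by simp
qed

lemma conv_down:
  assumes k: "good k" and o: "orb k p q" and x: "p < x" "x < q" and d: "k x < x"
  shows "(\<lambda>m. (k^^m) x) \<longlonglongrightarrow> p"
proof -
  define s where "s m = (k^^m) x" for m
  have rng: "p < s m \<and> s m < q" for m using iter_range[OF k o x] s_def by simp
  have dec1: "s (Suc m) < s m" for m
  proof (induction m)
    case 0 then show ?case using d by (simp add: s_def)
  next
    case (Suc m)
    then have "k (s (Suc m)) < k (s m)" using k by (simp add: good_less)
    then show ?case by (simp add: s_def)
  qed
  have "decseq s" by (rule decseq_SucI) (use dec1 in \<open>simp add: less_imp_le\<close>)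
  moreover have "\<forall>i. p \<le> s i" using rng less_imp_le by blast
  ultimately obtain L where L: "s \<longlonglongrightarrow> L" "\<forall>i. L \<le> s i"
    using decseq_convergent[of s p] by blast
  have "L \<ge> p" using LIMSEQ_le_const[OF L(1), of p] \<open>\<forall>i. p \<le> s i\<close> by blast
  have t0: "(\<lambda>m. k (s m)) \<longlonglongrightarrow> k L" using L(1) good_isCont[OF k] by (rule isCont_tendsto_compose[rotated])
  have eqf: "\<And>m. k (s m) = s (Suc m)" by (simp add: s_def)
  have t1: "(\<lambda>m. s (Suc m)) \<longlonglongrightarrow> k L" using t0 by (simp only: eqf)
  have kL: "k L = L" using LIMSEQ_unique[OF t1 LIMSEQ_Suc[OF L(1)]] .
  have "L \<le> x" using L(2)[rule_format, of 0] by (simp add: s_def)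
  have "L = p"
  proof (rule ccontr)
    assume "L \<noteq> p"
    then have "p < L" "L < q" using \<open>L \<ge> p\<close> \<open>L \<le> x\<close> x by auto
    then show False using kL o unfolding orb_def by auto
  qed
  then have "s \<longlonglongrightarrow> p" using L(1) by simp
  moreover have "s = (\<lambda>m. (k^^m) x)" by (simp add: s_def[abs_def])
  ultimately show ?thesis by simp
qed

lemma conv_any:
  assumes k: "good k" and o: "orb k p q" and x: "p < x" "x < q"
  shows "\<exists>K. (K = k \<or> K = inv k) \<and> (\<lambda>m. (K^^m) x) \<longlonglongrightarrow> p \<and> (\<forall>m. p < (K^^m) x \<and> (K^^m) x < q)"
proof (cases "k x < x")
  case True
  then show ?thesis using conv_down[OF k o x] iter_range[OF k o x] by blast
next
  case False
  then have "k x > x" using o x unfolding orb_def by force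
  then have "inv k x < inv k (k x)" using good_inv[OF k] by (simp add: good_less)
  then have "inv k x < x" using k by (simp add: good_inv_f)
  moreover have gk: "good (inv k)" using k by (rule good_inv)
  moreover have ok: "orb (inv k) p q" using k o by (rule orb_inv)
  ultimately show ?thesis using conv_down[OF gk ok x] iter_range[OF gk ok x] by blast
qed

lemma conv_near:
  assumes "(\<lambda>m. X m) \<longlonglongrightarrow> (p::real)" "e > 0"
  shows "\<exists>m. X m < p + e"
proof -
  from LIMSEQ_D[OF assms] obtain no where "\<forall>n\<ge>no. norm (X n - p) < e" by blast
  then have "norm (X no - p) < e" by simp
  then have "X no < p + e" by (simp add: abs_less_iff)
  then show ?thesis by blast
qed

lemma comm_inv_local:
  assumes k: "good k" and o: "orb k p q"
    and c: "\<forall>x. p < x \<and> x < q \<longrightarrow> h (k x) = k (h x)"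
  shows "\<forall>x. p < x \<and> x < q \<longrightarrow> h (inv k x) = inv k (h x)"
proof (intro allI impI)
  fix x assume x: "p < x \<and> x < q"
  have "orb (inv k) p q" using k o by (rule orb_inv)
  then have y: "p < inv k x \<and> inv k x < q" using iter_range[OF good_inv[OF k] _ , of p q x 1] x by simp
  then have "h (k (inv k x)) = k (h (inv k x))" using c by blast
  then have "h x = k (h (inv k x))" using k by (simp add: good_f_inv)
  then show "h (inv k x) = inv k (h x)" using k by (simp add: good_inv_f)
qed

lemma comm_pow:
  assumes c: "\<forall>x. p < x \<and> x < q \<longrightarrow> h (K x) = K (h x)"
    and r: "\<forall>m. p < (K^^m) x \<and> (K^^m) x < q"
  shows "h ((K^^m) x) = (K^^m) (h x)"
proof (induction m)
  case 0 then show ?case by simp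
next
  case (Suc m)
  have "h ((K^^Suc m) x) = h (K ((K^^m) x))" by simp
  also have "\<dots> = K (h ((K^^m) x))" using c r by blast
  also have "\<dots> = (K^^Suc m) (h x)" using Suc by simp
  finally show ?case .
qed

lemma agree:
  assumes k: "good k" and o: "orb k p q"
    and c1: "\<forall>x. p < x \<and> x < q \<longrightarrow> h1 (k x) = k (h1 x)"
    and c2: "\<forall>x. p < x \<and> x < q \<longrightarrow> h2 (k x) = k (h2 x)"
    and e: "e > 0" and eq: "\<forall>x. p < x \<and> x < p + e \<longrightarrow> h1 x = h2 x"
    and x: "p < x" "x < q"
  shows "h1 x = h2 x"
proof -
  obtain K where K: "K = k \<or> K = inv k" "(\<lambda>m. (K^^m) x) \<longlonglongrightarrow> p" "\<forall>m. p < (K^^m) x \<and> (K^^m) x < q"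
    using conv_any[OF k o x] by blast
  have gK: "good K" using K(1) k good_inv by blast
  have cK1: "\<forall>x. p < x \<and> x < q \<longrightarrow> h1 (K x) = K (h1 x)"
    using K(1) c1 comm_inv_local[OF k o c1] by blast
  have cK2: "\<forall>x. p < x \<and> x < q \<longrightarrow> h2 (K x) = K (h2 x)"
    using K(1) c2 comm_inv_local[OF k o c2] by blast
  obtain m where m: "(K^^m) x < p + e" using conv_near[OF K(2) e] by blast
  have "h1 ((K^^m) x) = h2 ((K^^m) x)" using eq m K(3) by blast
  then have "(K^^m) (h1 x) = (K^^m) (h2 x)" using comm_pow[OF cK1 K(3)] comm_pow[OF cK2 K(3)] by simp
  moreover have "inj (K^^m)" using good_inj[OF gK] by simp
  ultimately show ?thesis by (meson injD)
qed

lemma aff_two_fixed: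
  assumes a: "affon f s t" and y: "s \<le> y" "y \<le> t" "f y = y" and z: "s \<le> z" "z \<le> t" "f z = z" "y < z"
  shows "\<forall>x. s \<le> x \<and> x \<le> t \<longrightarrow> f x = x"
proof -
  obtain m k where h: "\<forall>x. s \<le> x \<and> x \<le> t \<longrightarrow> f x = m*x + k" using a unfolding affon_def by auto
  have "m*y + k = y" "m*z + k = z" using h y z by auto
  then have "m * (z - y) = z - y" by (simp add: algebra_simps)
  then have m1: "m = 1" using z(4) by simp
  then have "k = 0" using \<open>m*y + k = y\<close> by simp
  then show ?thesis using h m1 by simp
qed

lemma fixid:
  assumes k: "good k" and o: "orb k p q" and h: "good h" and hp: "h p = p"
    and c: "\<forall>x. p < x \<and> x < q \<longrightarrow> h (k x) = k (h x)"
    and y: "p < y" "y < q" "h y = y"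
    and x: "p < x" "x < q"
  shows "h x = x"
proof -
  obtain e where e: "e > 0" "affon h p (p+e)" using h unfolding good_def LA_def by blast
  obtain K where K: "K = k \<or> K = inv k" "(\<lambda>m. (K^^m) y) \<longlonglongrightarrow> p" "\<forall>m. p < (K^^m) y \<and> (K^^m) y < q"
    using conv_any[OF k o y(1,2)] by blast
  have cK: "\<forall>x. p < x \<and> x < q \<longrightarrow> h (K x) = K (h x)"
    using K(1) c comm_inv_local[OF k o c] by blast
  obtain m where m: "(K^^m) y < p + e" using conv_near[OF K(2) e(1)] by blast
  have hz: "h ((K^^m) y) = (K^^m) y" using comm_pow[OF cK K(3)] y(3) by simp
  have idn: "\<forall>x. p \<le> x \<and> x \<le> p + e \<longrightarrow> h x = x"
    using aff_two_fixed[OF e(2), of p "(K^^m) y"] hp hz m K(3) e(1) by (simp add: less_imp_le)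
  have c2: "\<forall>x. p < x \<and> x < q \<longrightarrow> id (k x) = k (id x)" by simp
  show ?thesis using agree[OF k o c c2 e(1) _ x] idn by simp
qed

lemma op_half:
  assumes g: "good g" and k: "good k" and c: "\<forall>x. g (k x) = k (g x)" and o: "orb k p q"
  shows "\<not> p < g p"
proof
  assume gp: "p < g p"
  have kp: "k p = p" using o unfolding orb_def by simp
  have "g (k p) = k (g p)" using c by blast
  then have kgp: "k (g p) = g p" using kp by simp
  have "q \<le> g p"
  proof (rule ccontr)
    assume "\<not> q \<le> g p" then show False using gp kgp o unfolding orb_def by auto
  qed
  have p1: "p < 1"
  proof (rule ccontr)
    assume "\<not> p < 1" then have "g p = p" using g by (simp add: good_out)
    then show False using gp by simp
  qed
  define s where "s m = (g^^m) p" for m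
  define t where "t m = (g^^m) q" for m
  have gm: "good (g^^m)" for m
  proof (induction m)
    case 0
    have a: "affon id s t" for s t unfolding affon_def by (rule exI[of _ 1], rule exI[of _ 0]) simp
    have "LA id" unfolding LA_def using a by (auto intro: exI[of _ 1])
    then have "good id" unfolding good_def by (simp add: strict_mono_def)
    then show ?case by (simp add: id_def)
  next
    case (Suc m) then show ?case using good_comp[OF Suc g] by (simp add: comp_def)
  qed
  have orbm: "orb k (s m) (t m)" for m
  proof (induction m)
    case 0 then show ?case using o by (simp add: s_def t_def)
  next
    case (Suc m)
    have st: "s (Suc m) = g (s m)" "t (Suc m) = g (t m)" by (simp_all add: s_def t_def)
    have "s m < t m" "k (s m) = s m" "k (t m) = t m" and mv: "\<forall>x. s m < x \<and> x < t m \<longrightarrow> k x \<noteq> x"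
      using Suc unfolding orb_def by auto
    have "g (s m) < g (t m)" using \<open>s m < t m\<close> g by (simp add: good_less)
    moreover have "k (g (s m)) = g (s m)" "k (g (t m)) = g (t m)"
      using c[rule_format, of "s m"] c[rule_format, of "t m"] \<open>k (s m) = s m\<close> \<open>k (t m) = t m\<close> by simp_all
    moreover have "\<forall>x. g (s m) < x \<and> x < g (t m) \<longrightarrow> k x \<noteq> x"
    proof (intro allI impI)
      fix x assume x: "g (s m) < x \<and> x < g (t m)"
      define y where "y = inv g x"
      have gy: "g y = x" using g by (simp add: y_def good_f_inv)
      have "g (s m) < g y \<and> g y < g (t m)" using x gy by simp
      then have "s m < y \<and> y < t m" using g by (simp add: good_less)
      then have "k y \<noteq> y" using mv by blast
      then have "g (k y) \<noteq> g y" using g by (simp add: good_eq)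
      moreover have "g (k y) = k (g y)" using c by blast
      ultimately show "k x \<noteq> x" using gy by simp
    qed
    ultimately show ?case using st unfolding orb_def by simp
  qed
  have tle: "t m \<le> s (Suc m)" for m
  proof -
    have "(g^^m) q \<le> (g^^m) (g p)" using \<open>q \<le> g p\<close> gm by (simp add: good_le)
    moreover have "(g^^Suc m) p = (g^^m) (g p)" by (simp only: funpow_Suc_right comp_def)
    ultimately show ?thesis by (simp add: s_def t_def)
  qed
  have slt: "s m < t m" for m using orbm unfolding orb_def by simp
  have sinc: "s m < s (Suc m)" for m using slt tle by (meson less_le_trans)
  have s1: "s m \<le> 1" for m
  proof -
    have "(g^^m) p \<le> (g^^m) 1" using p1 gm by (simp add: good_le)
    moreover have "(g^^m) 1 = 1" using gm by (simp add: good_out)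
    ultimately show ?thesis by (simp add: s_def)
  qed
  have "incseq s" by (rule incseq_SucI) (use sinc in \<open>simp add: less_imp_le\<close>)
  then obtain L where L: "s \<longlonglongrightarrow> L" "\<forall>i. s i \<le> L" using incseq_convergent[of s 1] s1 by blast
  have kfix: "k (s m) = s m" for m using orbm unfolding orb_def by simp
  have "(\<lambda>m. k (s m)) \<longlonglongrightarrow> k L" using L(1) good_isCont[OF k] by (rule isCont_tendsto_compose[rotated])
  then have kL: "k L = L" using L(1) kfix LIMSEQ_unique by auto
  obtain e where e: "e > 0" "affon k (L-e) L" using k unfolding good_def LA_def by blast
  obtain m where m: "L - e < s m"
  proof -
    from LIMSEQ_D[OF L(1) e(1)] obtain no where "\<forall>n\<ge>no. norm (s n - L) < e" by blast
    then have "norm (s no - L) < e" by simp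
    then have "L - e < s no" by (simp add: abs_less_iff)
    then show ?thesis using that by blast
  qed
  have smL: "s m < L" using sinc L(2) by (meson less_le_trans)
  have idk: "\<forall>x. L - e \<le> x \<and> x \<le> L \<longrightarrow> k x = x"
    using aff_two_fixed[OF e(2), of "s m" L] m smL kfix kL e(1) by (simp add: less_imp_le)
  define x where "x = (s m + t m)/2"
  have "s m < x" "x < t m" using slt[of m] by (simp_all add: x_def)
  moreover have "t m \<le> L" using tle L(2) by (meson order_trans)
  ultimately have "k x = x" using idk m by auto
  then show False using orbm[of m] \<open>s m < x\<close> \<open>x < t m\<close> unfolding orb_def by blast
qed

lemma op:
  assumes g: "good g" and k: "good k" and c: "\<forall>x. g (k x) = k (g x)" and o: "orb k p q"
  shows "g p = p \<and> g q = q"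
proof -
  have gi: "good (inv g)" using g by (rule good_inv)
  have ci: "\<forall>x. inv g (k x) = k (inv g x)"
  proof
    fix x
    have "g (k (inv g x)) = k (g (inv g x))" using c by blast
    then have "g (k (inv g x)) = k x" using g by (simp add: good_f_inv)
    then have "inv g (g (k (inv g x))) = inv g (k x)" by simp
    then show "inv g (k x) = k (inv g x)" using g by (simp add: good_inv_f)
  qed
  have n1: "\<not> p < g p" by (rule op_half[OF g k c o])
  have n2: "\<not> p < inv g p" by (rule op_half[OF gi k ci o])
  have n3: "\<not> g p < p"
  proof
    assume "g p < p"
    then have "inv g (g p) < inv g p" using gi by (simp add: good_less)
    then show False using n2 g by (simp add: good_inv_f)
  qed
  have gp: "g p = p" using n1 n3 by simp
  have gq: "g q = q"
  proof (rule ccontr)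
    assume ne: "g q \<noteq> q"
    show False
    proof (cases "g q < q")
      case True
      have "g p < g q" using o g unfolding orb_def by (simp add: good_less)
      then have "p < g q" using gp by simp
      moreover have "k (g q) = g q" using c[rule_format, of q] o unfolding orb_def by simp
      ultimately show False using True o unfolding orb_def by blast
    next
      case False
      then have "q < g q" using ne by simp
      have "k q \<noteq> q"
      proof -
        have "p < q" using o unfolding orb_def by simp
        then have "inv g p < inv g q" using gi by (simp add: good_less)
        have "inv g q < inv g (g q)" using \<open>q < g q\<close> gi by (simp add: good_less)
        then have "inv g q < q" using g by (simp add: good_inv_f)
        have igp: "inv g p = p" using gp g good_inv_f by metis
        have "p < inv g q" using \<open>inv g p < inv g q\<close> igp by simp
        then have "k (inv g q) \<noteq> inv g q" using \<open>inv g q < q\<close> o unfolding orb_def by blast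
        then have "g (k (inv g q)) \<noteq> g (inv g q)" using g by (simp add: good_eq)
        moreover have "g (k (inv g q)) = k (g (inv g q))" using c by blast
        ultimately show ?thesis using g by (simp add: good_f_inv)
      qed
      then show False using o unfolding orb_def by simp
    qed
  qed
  show ?thesis using gp gq by simp
qed



definition lin :: "(real \<Rightarrow> real) \<Rightarrow> real \<Rightarrow> real \<Rightarrow> real \<Rightarrow> bool" where
  "lin f p l e \<longleftrightarrow> 0 < e \<and> 0 < l \<and> (\<forall>x. p \<le> x \<and> x \<le> p + e \<longrightarrow> f x = p + l*(x-p))"

lemma lin_good: "good f \<Longrightarrow> f p = p \<Longrightarrow> \<exists>l e. lin f p l e"
proof -
  assume f: "good f" and fp: "f p = p"
  obtain e where e: "e > 0" "affon f p (p+e)" using f unfolding good_def LA_def by blast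
  obtain m k where h: "\<forall>x. p \<le> x \<and> x \<le> p+e \<longrightarrow> f x = m*x + k" using e(2) unfolding affon_def by auto
  have m: "m > 0" using affon_slope[of f p "p+e" m k] f h e(1) unfolding good_def by auto
  have "f p = m*p + k" using h e by auto
  then have k: "k = p - m*p" using fp by simp
  have "\<forall>x. p \<le> x \<and> x \<le> p + e \<longrightarrow> f x = p + m*(x-p)" using h k by (simp add: algebra_simps)
  then show ?thesis unfolding lin_def using e m by blast
qed

lemma lin_comp:
  assumes "lin f p l e" "lin h p l' e'"
  shows "lin (h \<circ> f) p (l*l') (min e (e'/l))"
proof -
  have l: "l > 0" "e > 0" "l' > 0" "e' > 0" using assms unfolding lin_def by auto
  have "\<forall>x. p \<le> x \<and> x \<le> p + min e (e'/l) \<longrightarrow> h (f x) = p + (l*l')*(x-p)"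
  proof (intro allI impI)
    fix x assume x: "p \<le> x \<and> x \<le> p + min e (e'/l)"
    then have fx: "f x = p + l*(x-p)" using assms(1) unfolding lin_def by auto
    have "l*(x-p) \<le> l*(e'/l)" using x l by (intro mult_left_mono) auto
    then have "l*(x-p) \<le> e'" using l by simp
    moreover have "0 \<le> l*(x-p)" using x l by simp
    ultimately have "h (f x) = p + l'*(l*(x-p))" using assms(2) fx unfolding lin_def by auto
    then show "h (f x) = p + (l*l')*(x-p)" by (simp add: algebra_simps)
  qed
  then show ?thesis unfolding lin_def using l by simp
qed

lemma lin_inv:
  assumes f: "good f" and a: "lin f p l e"
  shows "lin (inv f) p (1/l) (l*e)"
proof -
  have l: "l > 0" "e > 0" using a unfolding lin_def by auto
  have "\<forall>y. p \<le> y \<and> y \<le> p + l*e \<longrightarrow> inv f y = p + (1/l)*(y-p)"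
  proof (intro allI impI)
    fix y assume y: "p \<le> y \<and> y \<le> p + l*e"
    define x where "x = p + (1/l)*(y-p)"
    have "(1/l)*(y-p) \<le> (1/l)*(l*e)" using y l by (intro mult_left_mono) auto
    then have "x \<le> p + e" using l by (simp add: x_def)
    moreover have "p \<le> x" using y l by (simp add: x_def)
    ultimately have "f x = p + l*(x-p)" using a unfolding lin_def by auto
    then have "f x = y" using l by (simp add: x_def)
    then have "inv f y = x" using f good_inv_f by metis
    then show "inv f y = p + (1/l)*(y-p)" by (simp add: x_def)
  qed
  then show ?thesis unfolding lin_def using l by simp
qed

lemma lin_cong: "lin f p l e \<Longrightarrow> l = l' \<Longrightarrow> lin f p l' e" by simp

lemma orb_conj:
  assumes f: "good f0" and o: "orb k p q"
  shows "orb (f0 \<circ> (k \<circ> inv f0)) (f0 p) (f0 q)"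
proof -
  have "f0 p < f0 q" using o f unfolding orb_def by (simp add: good_less)
  moreover have "(f0 \<circ> (k \<circ> inv f0)) (f0 p) = f0 p" "(f0 \<circ> (k \<circ> inv f0)) (f0 q) = f0 q"
    using o f unfolding orb_def by (simp_all add: good_inv_f)
  moreover have "\<forall>x. f0 p < x \<and> x < f0 q \<longrightarrow> (f0 \<circ> (k \<circ> inv f0)) x \<noteq> x"
  proof (intro allI impI)
    fix x assume x: "f0 p < x \<and> x < f0 q"
    define y where "y = inv f0 x"
    have fy: "f0 y = x" using f by (simp add: y_def good_f_inv)
    have "p < y \<and> y < q" using x fy f by (metis good_less)
    then have "k y \<noteq> y" using o unfolding orb_def by blast
    then have "f0 (k y) \<noteq> f0 y" using f by (simp add: good_eq)
    then show "(f0 \<circ> (k \<circ> inv f0)) x \<noteq> x" using fy by (simp add: y_def)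
  qed
  ultimately show ?thesis unfolding orb_def by blast
qed

lemma comp_orb:
  assumes B: "{b<..<d} \<in> components (supp f)"
  shows "orb f b d"
proof -
  have ne: "{b<..<d} \<noteq> {}" using in_components_nonempty[OF B] .
  then have bd: "b < d" by simp
  have sub: "{b<..<d} \<subseteq> supp f" using in_components_subset[OF B] .
  have max: "\<And>D. D \<noteq> {} \<Longrightarrow> {b<..<d} \<subseteq> D \<Longrightarrow> D \<subseteq> supp f \<Longrightarrow> connected D \<Longrightarrow> D = {b<..<d}"
    using B unfolding in_components_maximal by blast
  have fb: "f b = b"
  proof (rule ccontr)
    assume "f b \<noteq> b"
    moreover have "{b..<d} = insert b {b<..<d}" using bd by auto
    ultimately have "{b..<d} \<subseteq> supp f" using sub by (auto simp: supp_def)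
    then have "{b..<d} = {b<..<d}" by (intro max) (use bd in auto)
    then show False using bd by (metis atLeastLessThan_iff greaterThanLessThan_iff order_refl less_irrefl)
  qed
  have fd: "f d = d"
  proof (rule ccontr)
    assume "f d \<noteq> d"
    moreover have "{b<..d} = insert d {b<..<d}" using bd by auto
    ultimately have "{b<..d} \<subseteq> supp f" using sub by (auto simp: supp_def)
    then have "{b<..d} = {b<..<d}" by (intro max) (use bd in auto)
    then show False using bd by (metis greaterThanAtMost_iff greaterThanLessThan_iff order_refl less_irrefl)
  qed
  show ?thesis unfolding orb_def using bd fb fd sub by (auto simp: supp_def)
qed

lemma PL0_basic:
  assumes "PL0 f"
  shows "\<And>x. x \<le> 0 \<Longrightarrow> f x = x" "\<And>x. 1 \<le> x \<Longrightarrow> f x = x" "\<And>x. min x 0 \<le> f x" "\<And>x. f x \<le> max x 1"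
proof -
  have out: "\<forall>x. x \<notin> {0..1} \<longrightarrow> f x = x" and f0: "f 0 = 0" and f1: "f 1 = 1"
    and sm: "strict_mono_on {0..1} f" using assms unfolding PL0_def by auto
  show a: "\<And>x. x \<le> 0 \<Longrightarrow> f x = x" using out f0 by (metis atLeastAtMost_iff linorder_not_le order_antisym_conv)
  show b: "\<And>x. 1 \<le> x \<Longrightarrow> f x = x" using out f1 by (metis atLeastAtMost_iff linorder_not_le order_antisym_conv)
  have mid: "0 \<le> f x \<and> f x \<le> 1" if "0 \<le> x" "x \<le> 1" for x
  proof -
    have "f 0 \<le> f x" "f x \<le> f 1" using sm that by (auto simp: strict_mono_on_leD)
    then show ?thesis using f0 f1 by simp
  qed
  show "\<And>x. min x 0 \<le> f x"
  proof -
    fix x show "min x 0 \<le> f x" using a[of x] b[of x] mid[of x] by (cases "x \<le> 0"; cases "1 \<le> x") auto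
  qed
  show "\<And>x. f x \<le> max x 1"
  proof -
    fix x show "f x \<le> max x 1" using a[of x] b[of x] mid[of x] by (cases "x \<le> 0"; cases "1 \<le> x") auto
  qed
qed

lemma PL0_left:
  assumes "PL0 f" shows "\<exists>e>0. affon f (t-e) t"
proof -
  obtain P where P: "finite P" "{0,1} \<subseteq> P" "P \<subseteq> {0..1}"
    "\<forall>u v. u \<in> P \<and> v \<in> P \<and> u < v \<and> {u<..<v} \<inter> P = {} \<longrightarrow> (\<exists>m k. \<forall>x\<in>{u..v}. f x = m * x + k)"
    using assms unfolding PL0_def by blast
  note bas = PL0_basic[OF assms]
  consider "t \<le> 0" | "1 < t" | "0 < t \<and> t \<le> 1" by linarith
  then show ?thesis
  proof cases
    case 1
    have "affon f (t-1) t" unfolding affon_def using bas(1) 1 by (intro exI[of _ 1] exI[of _ 0]) auto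
    then show ?thesis by (intro exI[of _ 1]) auto
  next
    case 2
    have "affon f (t-(t-1)) t" unfolding affon_def using bas(2) 2 by (intro exI[of _ 1] exI[of _ 0]) auto
    then show ?thesis using 2 by (intro exI[of _ "t-1"]) auto
  next
    case 3
    define L where "L = {p\<in>P. p < t}"
    define R where "R = {p\<in>P. t \<le> p}"
    have fL: "finite L" "L \<noteq> {}" using P 3 by (auto simp: L_def)
    have fR: "finite R" "R \<noteq> {}" using P 3 by (auto simp: R_def)
    define u where "u = Max L"
    define v where "v = Min R"
    have uL: "u \<in> L" using fL by (simp add: u_def)
    have vR: "v \<in> R" using fR by (simp add: v_def)
    have uv: "u \<in> P" "v \<in> P" "u < t" "t \<le> v" using uL vR by (auto simp: L_def R_def)
    have emp: "{u<..<v} \<inter> P = {}"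
    proof (rule ccontr)
      assume "{u<..<v} \<inter> P \<noteq> {}"
      then obtain p where p: "p \<in> P" "u < p" "p < v" by auto
      show False
      proof (cases "p < t")
        case True
        then have "p \<in> L" using p by (simp add: L_def)
        then have "p \<le> u" using fL by (simp add: u_def)
        then show False using p by simp
      next
        case False
        then have "p \<in> R" using p by (simp add: R_def)
        then have "v \<le> p" using fR by (simp add: v_def)
        then show False using p by simp
      qed
    qed
    obtain m k where mk: "\<forall>x\<in>{u..v}. f x = m * x + k" using P(4) uv emp by force
    have "affon f (t - (t-u)) t" unfolding affon_def using mk uv by (intro exI[of _ m] exI[of _ k]) auto
    then show ?thesis using uv by (intro exI[of _ "t-u"]) auto
  qed
qed

lemma PL0_right:
  assumes "PL0 f" shows "\<exists>e>0. affon f t (t+e)"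
proof -
  obtain P where P: "finite P" "{0,1} \<subseteq> P" "P \<subseteq> {0..1}"
    "\<forall>u v. u \<in> P \<and> v \<in> P \<and> u < v \<and> {u<..<v} \<inter> P = {} \<longrightarrow> (\<exists>m k. \<forall>x\<in>{u..v}. f x = m * x + k)"
    using assms unfolding PL0_def by blast
  note bas = PL0_basic[OF assms]
  consider "1 \<le> t" | "t < 0" | "0 \<le> t \<and> t < 1" by linarith
  then show ?thesis
  proof cases
    case 1
    have "affon f t (t+1)" unfolding affon_def using bas(2) 1 by (intro exI[of _ 1] exI[of _ 0]) auto
    then show ?thesis by (intro exI[of _ 1]) auto
  next
    case 2
    have "affon f t (t+(-t))" unfolding affon_def using bas(1) 2 by (intro exI[of _ 1] exI[of _ 0]) auto
    then show ?thesis using 2 by (intro exI[of _ "-t"]) auto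
  next
    case 3
    define L where "L = {p\<in>P. p \<le> t}"
    define R where "R = {p\<in>P. t < p}"
    have fL: "finite L" "L \<noteq> {}" using P 3 by (auto simp: L_def)
    have fR: "finite R" "R \<noteq> {}" using P 3 by (auto simp: R_def)
    define u where "u = Max L"
    define v where "v = Min R"
    have uL: "u \<in> L" using fL by (simp add: u_def)
    have vR: "v \<in> R" using fR by (simp add: v_def)
    have uv: "u \<in> P" "v \<in> P" "u \<le> t" "t < v" using uL vR by (auto simp: L_def R_def)
    have emp: "{u<..<v} \<inter> P = {}"
    proof (rule ccontr)
      assume "{u<..<v} \<inter> P \<noteq> {}"
      then obtain p where p: "p \<in> P" "u < p" "p < v" by auto
      show False
      proof (cases "p \<le> t")
        case True
        then have "p \<in> L" using p by (simp add: L_def)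
        then have "p \<le> u" using fL by (simp add: u_def)
        then show False using p by simp
      next
        case False
        then have "p \<in> R" using p by (simp add: R_def)
        then have "v \<le> p" using fR by (simp add: v_def)
        then show False using p by simp
      qed
    qed
    obtain m k where mk: "\<forall>x\<in>{u..v}. f x = m * x + k" using P(4) uv emp by force
    have "affon f t (t + (v-t))" unfolding affon_def using mk uv by (intro exI[of _ m] exI[of _ k]) auto
    then show ?thesis using uv by (intro exI[of _ "v-t"]) auto
  qed
qed

lemma PL0_good:
  assumes f: "PL0 f" shows "good f"
proof -
  note bas = PL0_basic[OF f]
  have sm01: "strict_mono_on {0..1} f" and ct: "continuous_on {0..1} f" and f0: "f 0 = 0" and f1: "f 1 = 1"
    using f unfolding PL0_def by auto
  have sm: "strict_mono f"
  proof (rule strict_monoI)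
    fix x y :: real assume xy: "x < y"
    show "f x < f y"
    proof (cases "0 \<le> x \<and> y \<le> 1")
      case True then show ?thesis using sm01 xy by (auto simp: strict_mono_on_def)
    next
      case False
      then consider "x < 0" | "1 < y" by linarith
      then show ?thesis
      proof cases
        case 1 then show ?thesis using bas(1)[of x] bas(3)[of y] xy by linarith
      next
        case 2 then show ?thesis using bas(2)[of y] bas(4)[of x] xy by linarith
      qed
    qed
  qed
  have su: "surj f"
  proof -
    have "y \<in> range f" for y
    proof (cases "0 \<le> y \<and> y \<le> 1")
      case True
      then obtain x where "0 \<le> x" "x \<le> 1" "f x = y" using IVT'[of f 0 y 1] ct f0 f1 by auto
      then show ?thesis by (metis rangeI)
    next
      case False
      then have "f y = y" using bas(1) bas(2) by (meson linear)
      then show ?thesis by (metis rangeI)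
    qed
    then show ?thesis by auto
  qed
  have out: "\<forall>x. (x \<le> 0 \<or> 1 \<le> x) \<longrightarrow> f x = x" using bas(1) bas(2) by blast
  have la: "LA f" unfolding LA_def
  proof
    fix t
    obtain e1 where e1: "e1 > 0" "affon f (t-e1) t" using PL0_left[OF f] by blast
    obtain e2 where e2: "e2 > 0" "affon f t (t+e2)" using PL0_right[OF f] by blast
    have "affon f (t - min e1 e2) t" by (rule affon_mono[OF e1(2)]) auto
    moreover have "affon f t (t + min e1 e2)" by (rule affon_mono[OF e2(2)]) auto
    ultimately show "\<exists>e>0. affon f (t - e) t \<and> affon f t (t + e)" using e1 e2 by (intro exI[of _ "min e1 e2"]) auto
  qed
  show ?thesis unfolding good_def using sm su out la by blast
qed



lemma nofix:
  assumes g: "good g" and k: "good k" and c: "\<forall>x. g (k x) = k (g x)" and o: "orb k p q"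
    and e: "p < e" "e < q" "g e \<noteq> e"
  shows "\<forall>y. p < y \<and> y < q \<longrightarrow> g y \<noteq> y"
proof (intro allI impI notI)
  fix y assume y: "p < y \<and> y < q" and gy: "g y = y"
  have gp: "g p = p" using op[OF g k c o] by simp
  have cl: "\<forall>x. p < x \<and> x < q \<longrightarrow> g (k x) = k (g x)" using c by blast
  have "g e = e" using fixid[OF k o g gp cl _ _ gy e(1,2)] y by blast
  then show False using e(3) by simp
qed

lemma endeq:
  fixes j1 j2 k1 k2 e :: real
  assumes "j1 < e" "e < j2" "k1 < e" "e < k2"
    "g j1 = j1" "g j2 = j2" "g k1 = k1" "g k2 = k2"
    and nj: "\<forall>y. j1 < y \<and> y < j2 \<longrightarrow> g y \<noteq> y"
    and nk: "\<forall>y. k1 < y \<and> y < k2 \<longrightarrow> g y \<noteq> y"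
  shows "j1 = k1 \<and> j2 = k2"
proof -
  have "\<not> j1 < k1" using nj assms(3,2,7) by force
  moreover have "\<not> k1 < j1" using nk assms(1,4,5) by force
  moreover have "\<not> j2 < k2" using nk assms(3,2,6) by force
  moreover have "\<not> k2 < j2" using nj assms(1,4,8) by force
  ultimately show ?thesis by linarith
qed

lemma hard:
  assumes f0: "good f0" and f1: "good f1"
    and gd: "g = inv f1 \<circ> f0" and ud: "u = f0 \<circ> (f1 \<circ> inv f0)" and vd: "v = f0 \<circ> (u \<circ> inv f0)"
    and c1: "\<forall>x. g (u x) = u (g x)" and c2: "\<forall>x. g (v x) = v (g x)"
    and o: "orb f1 p q" and fp: "f0 p = p" and fq: "f0 q = q"
    and e: "p < e" "e < q" "f0 e = e" "g e \<noteq> e"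
    and z: "p < z" "z < q" "f0 z \<noteq> z"
  shows False
proof -
  have gg: "good g" using gd f0 f1 by (simp add: good_comp good_inv)
  have gu: "good u" using ud f0 f1 by (simp add: good_comp good_inv)
  have gv: "good v" using vd f0 gu by (simp add: good_comp good_inv)
  have ou: "orb u p q" using orb_conj[OF f0 o] fp fq ud by simp
  have ov: "orb v p q" using orb_conj[OF f0 ou] fp fq vd by simp
  have gnf: "\<forall>y. p < y \<and> y < q \<longrightarrow> g y \<noteq> y" using nofix[OF gg gu c1 ou e(1,2,4)] .
  have gpq: "g p = p \<and> g q = q" using op[OF gg gu c1 ou] .
  have og: "orb g p q" unfolding orb_def using gpq gnf o unfolding orb_def by auto
  obtain l0 e0 where L0: "lin f0 p l0 e0" using lin_good[OF f0 fp] by blast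
  have f1p: "f1 p = p" using o unfolding orb_def by simp
  obtain l1 e1 where L1: "lin f1 p l1 e1" using lin_good[OF f1 f1p] by blast
  have l0: "l0 > 0" using L0 unfolding lin_def by simp
  have Li0: "lin (inv f0) p (1/l0) (l0*e0)" using lin_inv[OF f0 L0] .
  obtain eu where Lu: "lin u p l1 eu"
  proof -
    have "lin (f0 \<circ> (f1 \<circ> inv f0)) p (1/l0*l1*l0) (min (min (l0*e0) (e1/(1/l0))) (e0/(1/l0*l1)))"
      by (intro lin_comp Li0 L1 L0)
    then have "lin u p l1 (min (min (l0*e0) (e1/(1/l0))) (e0/(1/l0*l1)))" using l0 ud by simp
    then show ?thesis using that by blast
  qed
  obtain ev where Lv: "lin v p l1 ev"
  proof -
    have "lin (f0 \<circ> (u \<circ> inv f0)) p (1/l0*l1*l0) (min (min (l0*e0) (eu/(1/l0))) (e0/(1/l0*l1)))"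
      by (intro lin_comp Li0 Lu L0)
    then have "lin v p l1 (min (min (l0*e0) (eu/(1/l0))) (e0/(1/l0*l1)))" using l0 vd by simp
    then show ?thesis using that by blast
  qed
  have ep: "min eu ev > 0" using Lu Lv unfolding lin_def by simp
  have equv: "\<forall>x. p < x \<and> x < p + min eu ev \<longrightarrow> u x = v x"
    using Lu Lv unfolding lin_def by auto
  have cu: "\<forall>x. p < x \<and> x < q \<longrightarrow> u (g x) = g (u x)" using c1 by simp
  have cv: "\<forall>x. p < x \<and> x < q \<longrightarrow> v (g x) = g (v x)" using c2 by simp
  have uv: "\<forall>x. p < x \<and> x < q \<longrightarrow> u x = v x"
    using agree[OF gg og cu cv ep equv] by blast
  have cf: "\<forall>y. p < y \<and> y < q \<longrightarrow> f0 (u y) = u (f0 y)"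
  proof (intro allI impI)
    fix y assume y: "p < y \<and> y < q"
    have "f0 p < f0 y" "f0 y < f0 q" using y f0 by (auto simp: good_less)
    then have "p < f0 y \<and> f0 y < q" using fp fq by simp
    then have "u (f0 y) = v (f0 y)" using uv by blast
    also have "\<dots> = f0 (u y)" using vd f0 by (simp add: good_inv_f)
    finally show "f0 (u y) = u (f0 y)" by simp
  qed
  have "f0 z = z" using fixid[OF gu ou f0 fp cf e(1,2,3) z(1,2)] .
  then show False using z(3) by simp
qed

lemma pcomm_id:
  assumes a: "good a" and b: "good b" and h: "pcomm a b = id"
  shows "\<forall>x. b (a x) = a (b x)"
proof
  fix x
  have "inv b (inv a (b (a x))) = x" using h unfolding pcomm_def pmult_def pinv_def by (metis comp_apply id_apply)
  then have "b (inv b (inv a (b (a x)))) = b x" by simp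
  then have "inv a (b (a x)) = b x" using b by (simp add: good_f_inv)
  then have "a (inv a (b (a x))) = a (b x)" by simp
  then show "b (a x) = a (b x)" using a by (simp add: good_f_inv)
qed



lemma good_lt_fix: "good f \<Longrightarrow> f p = p \<Longrightarrow> x < p \<Longrightarrow> f x < p"
  by (metis good_less)
lemma good_gt_fix: "good f \<Longrightarrow> f p = p \<Longrightarrow> p < x \<Longrightarrow> p < f x"
  by (metis good_less)

theorem lemma2p6:
  fixes f0 f1 :: "real \<Rightarrow> real" and a c :: real and n :: nat and b d :: "nat \<Rightarrow> real"
  assumes "PL0 f0" and "PL0 f1"
    and "pcomm (pconj f1 f0) (pmult f0 (pinv f1)) = id"
    and "pcomm (pmult f0 (pinv f1)) (pconj f1 (pmult f0 f0)) = id"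
    and "down_bump f0 {a<..<c}"
    and "\<not> orbital f1 {a<..<c}"
    and "n \<ge> 1"
    and "\<forall>i\<in>{1..n}. b i < d i"
    and "\<forall>i\<in>{1..<n}. d i \<le> b (Suc i)"
    and "{B. orbital f1 B \<and> B \<inter> {a<..<c} \<noteq> {}} = (\<lambda>i. {b i<..<d i}) ` {1..n}"
  shows "d n < c \<and>
    (\<exists>\<rho>>a. \<forall>x\<in>{a..\<rho>}. f0 x = f1 x) \<and>
    b 1 = a \<and>
    (\<forall>\<rho>. (\<rho> \<in> {a..1} \<and> (\<forall>x\<in>{a..\<rho>}. f0 x = f1 x) \<and>
              (\<forall>\<sigma>\<in>{a..1}. (\<forall>x\<in>{a..\<sigma>}. f0 x = f1 x) \<longrightarrow> \<sigma> \<le> \<rho>))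
            \<longrightarrow> f0 (d 1) \<le> \<rho>) \<and>
    f0 (d n) < d 1"
proof -
  note H = assms
  have gf0: "good f0" using PL0_good[OF H(1)] .
  have gf1: "good f1" using PL0_good[OF H(2)] .
  define g where "g = inv f1 \<circ> f0"
  define u where "u = f0 \<circ> (f1 \<circ> inv f0)"
  define v where "v = f0 \<circ> (u \<circ> inv f0)"
  have gg: "good g" using gf0 gf1 by (simp add: g_def good_comp good_inv)
  have gu: "good u" using gf0 gf1 by (simp add: u_def good_comp good_inv)
  have gv: "good v" using gf0 gu by (simp add: v_def good_comp good_inv)
  have e1: "pmult f0 (pinv f1) = g" by (simp add: pmult_def pinv_def g_def)
  have e2: "pconj f1 f0 = u" by (simp add: pconj_def pmult_def pinv_def u_def comp_assoc)
  have e3: "pconj f1 (pmult f0 f0) = v"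
  proof -
    have "inv (f0 \<circ> f0) = inv f0 \<circ> inv f0" using good_bij[OF gf0] by (simp add: o_inv_distrib)
    then show ?thesis by (simp add: pconj_def pmult_def pinv_def v_def u_def comp_assoc)
  qed
  have c1: "\<forall>x. g (u x) = u (g x)" using pcomm_id[OF gu gg] H(3) e1 e2 by simp
  have c2: "\<forall>x. g (v x) = v (g x)" using pcomm_id[OF gg gv] H(4) e1 e3 by simp
  have gfix: "\<And>x. g x = x \<longleftrightarrow> f0 x = f1 x"
  proof -
    fix x
    have "g x = x \<longleftrightarrow> f1 (g x) = f1 x" using gf1 by (simp add: good_eq)
    also have "f1 (g x) = f0 x" using gf1 by (simp add: g_def good_f_inv)
    finally show "g x = x \<longleftrightarrow> f0 x = f1 x" .
  qed
  have dbA: "{a<..<c} \<in> components (supp f0)" and dec: "\<forall>x\<in>{a<..<c}. f0 x < x"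
    using H(5) unfolding down_bump_def orbital_def by auto
  have oA: "orb f0 a c" using comp_orb[OF dbA] .
  have ac: "a < c" "f0 a = a" "f0 c = c" using oA unfolding orb_def by auto
  have decx: "\<And>x. a < x \<Longrightarrow> x < c \<Longrightarrow> f0 x < x \<and> a < f0 x"
  proof -
    fix x assume x: "a < x" "x < c"
    have "f0 a < f0 x" using x gf0 by (simp add: good_less)
    then show "f0 x < x \<and> a < f0 x" using dec x ac by auto
  qed
  have c1le: "c \<le> 1"
  proof (rule ccontr)
    assume "\<not> c \<le> 1"
    define x where "x = (max a 1 + c)/2"
    have x: "a < x" "x < c" "1 \<le> x" using \<open>\<not> c \<le> 1\<close> ac by (auto simp: x_def)
    have "f0 x = x" using gf0 x(3) by (simp add: good_out)
    then show False using decx[OF x(1,2)] by simp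
  qed
  have oI: "\<And>i. i \<in> {1..n} \<Longrightarrow> orb f1 (b i) (d i)"
  proof -
    fix i assume "i \<in> {1..n}"
    then have "{b i<..<d i} \<in> {B. orbital f1 B \<and> B \<inter> {a<..<c} \<noteq> {}}" using H(10) by blast
    then show "orb f1 (b i) (d i)" using comp_orb unfolding orbital_def by blast
  qed
  have meet: "\<And>i. i \<in> {1..n} \<Longrightarrow> b i < c \<and> a < d i"
  proof -
    fix i assume "i \<in> {1..n}"
    then have "{b i<..<d i} \<inter> {a<..<c} \<noteq> {}" using H(10) by blast
    then show "b i < c \<and> a < d i" by auto
  qed
  have cover: "\<And>x. a < x \<Longrightarrow> x < c \<Longrightarrow> f1 x \<noteq> x \<Longrightarrow> \<exists>i\<in>{1..n}. b i < x \<and> x < d i"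
  proof -
    fix x assume x: "a < x" "x < c" "f1 x \<noteq> x"
    then have "x \<in> \<Union>(components (supp f1))" by (simp add: supp_def)
    then obtain C where C: "C \<in> components (supp f1)" "x \<in> C" by blast
    then have "C \<in> {B. orbital f1 B \<and> B \<inter> {a<..<c} \<noteq> {}}" using x unfolding orbital_def by auto
    then obtain i where "i \<in> {1..n}" "C = {b i<..<d i}" using H(10) by blast
    then show "\<exists>i\<in>{1..n}. b i < x \<and> x < d i" using C(2) by auto
  qed
  have ordj: "\<And>j. j \<le> n \<Longrightarrow> \<forall>i. 1 \<le> i \<and> i < j \<longrightarrow> d i \<le> b j"
  proof -
    fix j show "j \<le> n \<Longrightarrow> \<forall>i. 1 \<le> i \<and> i < j \<longrightarrow> d i \<le> b j"
    proof (induction j)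
      case 0 then show ?case by simp
    next
      case (Suc j)
      show ?case
      proof (intro allI impI)
        fix i assume i: "1 \<le> i \<and> i < Suc j"
        have dj: "d j \<le> b (Suc j)" if "1 \<le> j" using H(9) Suc.prems that by auto
        show "d i \<le> b (Suc j)"
        proof (cases "i = j")
          case True then show ?thesis using dj i by simp
        next
          case False
          then have "i < j" using i by simp
          then have "d i \<le> b j" using Suc i by auto
          moreover have "b j < d j" using H(8) Suc.prems \<open>i < j\<close> i by auto
          moreover have "1 \<le> j" using \<open>i < j\<close> i by simp
          ultimately show ?thesis using dj by fastforce
        qed
      qed
    qed
  qed
  have ord: "\<And>i j. 1 \<le> i \<Longrightarrow> i < j \<Longrightarrow> j \<le> n \<Longrightarrow> d i \<le> b j" using ordj by blast
  have bd: "\<And>i. i \<in> {1..n} \<Longrightarrow> b i < d i" using H(8) by blast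
  have n1: "1 \<in> {1..n}" "n \<in> {1..n}" using H(7) by auto
  have bmono: "\<And>i. i \<in> {1..n} \<Longrightarrow> b 1 \<le> b i"
  proof -
    fix i assume i: "i \<in> {1..n}"
    show "b 1 \<le> b i"
    proof (cases "i = 1")
      case False
      then have "d 1 \<le> b i" using ord[of 1 i] i by auto
      then show ?thesis using bd[OF n1(1)] by simp
    qed simp
  qed
  have dmono: "\<And>i. i \<in> {1..n} \<Longrightarrow> d i \<le> d n"
  proof -
    fix i assume i: "i \<in> {1..n}"
    show "d i \<le> d n"
    proof (cases "i = n")
      case False
      then have "d i \<le> b n" using ord[of i n] i by auto
      then show ?thesis using bd[OF n1(2)] by simp
    qed simp
  qed
  have oJ: "\<And>i. i \<in> {1..n} \<Longrightarrow> orb u (f0 (b i)) (f0 (d i))"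
    using orb_conj[OF gf0 oI] u_def by simp
  have oK: "\<And>i. i \<in> {1..n} \<Longrightarrow> orb v (f0 (f0 (b i))) (f0 (f0 (d i)))"
    using orb_conj[OF gf0 oJ] v_def by simp
  have gJ: "\<And>i. i \<in> {1..n} \<Longrightarrow> g (f0 (b i)) = f0 (b i) \<and> g (f0 (d i)) = f0 (d i)"
    using op[OF gg gu c1 oJ] by blast
  have gK: "\<And>i. i \<in> {1..n} \<Longrightarrow> g (f0 (f0 (b i))) = f0 (f0 (b i)) \<and> g (f0 (f0 (d i))) = f0 (f0 (d i))"
    using op[OF gg gv c2 oK] by blast
  have gmove: "\<And>x. a < x \<Longrightarrow> x < c \<Longrightarrow> f1 x = x \<Longrightarrow> g x \<noteq> x"
  proof
    fix x assume x: "a < x" "x < c" "f1 x = x" "g x = x"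
    then have "f0 x = x" using gfix[of x] by simp
    then show False using decx[OF x(1,2)] by simp
  qed
  have vd': "v = f0 \<circ> (u \<circ> inv f0)" by (simp add: v_def)
  have b1a: "b 1 = a"
  proof (rule ccontr)
    assume "b 1 \<noteq> a"
    then consider "b 1 < a" | "a < b 1" by linarith
    then show False
    proof cases
      case 1
      have ad: "a < d 1" using meet[OF n1(1)] by simp
      have f1a: "f1 a \<noteq> a" using oI[OF n1(1)] 1 ad unfolding orb_def by blast
      have ga: "g a \<noteq> a" using gfix ac f1a by simp
      have j1: "f0 (b 1) < a" "a < f0 (d 1)" using good_lt_fix[OF gf0 ac(2) 1] good_gt_fix[OF gf0 ac(2) ad] by auto
      have k1: "f0 (f0 (b 1)) < a" "a < f0 (f0 (d 1))" using good_lt_fix[OF gf0 ac(2) j1(1)] good_gt_fix[OF gf0 ac(2) j1(2)] by auto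
      have nJ: "\<forall>y. f0 (b 1) < y \<and> y < f0 (d 1) \<longrightarrow> g y \<noteq> y"
        using nofix[OF gg gu c1 oJ[OF n1(1)] j1 ga] .
      have nK: "\<forall>y. f0 (f0 (b 1)) < y \<and> y < f0 (f0 (d 1)) \<longrightarrow> g y \<noteq> y"
        using nofix[OF gg gv c2 oK[OF n1(1)] k1 ga] .
      have eq: "f0 (b 1) = f0 (f0 (b 1)) \<and> f0 (d 1) = f0 (f0 (d 1))"
        using endeq[OF j1 k1 _ _ _ _ nJ nK] gJ[OF n1(1)] gK[OF n1(1)] by blast
      have fb: "f0 (b 1) = b 1" "f0 (d 1) = d 1" using eq gf0 by (simp_all add: good_eq)
      define z where "z = (a + min c (d 1))/2"
      have z: "a < z" "z < c" "z < d 1" using ac ad by (auto simp: z_def)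
      have "f0 z \<noteq> z" using decx[OF z(1,2)] by simp
      show False
        using hard[OF gf0 gf1 g_def u_def vd' c1 c2 oI[OF n1(1)] fb 1 ad ac(2) ga _ z(3)] z(1) 1 \<open>f0 z \<noteq> z\<close> by simp
    next
      case 2
      define y where "y = f0 (b 1)"
      have b1c: "b 1 < c" using meet[OF n1(1)] by simp
      have y: "a < y" "y < b 1" using decx[OF 2 b1c] by (simp_all add: y_def)
      have gy: "g y = y" using gJ[OF n1(1)] by (simp add: y_def)
      have f1y: "f1 y = y"
      proof (rule ccontr)
        assume "f1 y \<noteq> y"
        then obtain i where i: "i \<in> {1..n}" "b i < y" "y < d i" using cover[of y] y b1c by auto
        then show False using bmono[OF i(1)] y by simp
      qed
      have "f0 y = y" using gy gfix f1y by simp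
      then show False using decx[of y] y b1c by simp
    qed
  qed
  have dnc: "d n < c"
  proof (rule ccontr)
    assume "\<not> d n < c"
    then have cdn: "c \<le> d n" by simp
    have on: "orb f1 (b n) (d n)" using oI[OF n1(2)] .
    have bnc: "b n < c" using meet[OF n1(2)] by simp
    have bna: "n \<noteq> 1 \<Longrightarrow> a < b n"
    proof -
      assume "n \<noteq> 1"
      then have "d 1 \<le> b n" using ord[of 1 n] H(7) by simp
      then show "a < b n" using bd[OF n1(1)] b1a by simp
    qed
    consider "d n = c" | "c < d n" using cdn by linarith
    then show False
    proof cases
      case 1
      show False
      proof (cases "n = 1")
        case True
        have "orbital f1 {b 1<..<d 1}" using H(10) n1(1) by blast
        then show False using H(6) b1a 1 True by simp
      next
        case False
        have abn: "a < b n" using bna[OF False] .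
        define y where "y = f0 (b n)"
        have y: "f0 y < y" "a < f0 y" "y < b n" "a < y" using decx[OF abn bnc] decx[of y] bnc
          by (auto simp: y_def)
        have Kn: "orb v (f0 y) c" using oK[OF n1(2)] 1 ac by (simp add: y_def)
        have gy: "g y = y" using gJ[OF n1(2)] by (simp add: y_def)
        have gl: "g (f0 y) = f0 y" using gK[OF n1(2)] by (simp add: y_def)
        have cl: "\<forall>x. f0 y < x \<and> x < c \<longrightarrow> g (v x) = v (g x)" using c2 by blast
        have yc: "y < c" using y bnc by simp
        have x1: "f0 y < b n" using y by simp
        have "g (b n) = b n" using fixid[OF gv Kn gg gl cl y(1) yc gy x1 bnc] .
        moreover have "f1 (b n) = b n" using on unfolding orb_def by simp
        ultimately show False using gmove[OF abn bnc] by simp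
      qed
    next
      case 2
      have f1c: "f1 c \<noteq> c" using on bnc 2 unfolding orb_def by blast
      have gc: "g c \<noteq> c" using gfix ac f1c by simp
      have j1: "f0 (b n) < c" "c < f0 (d n)" using good_lt_fix[OF gf0 ac(3) bnc] good_gt_fix[OF gf0 ac(3) 2] by auto
      have k1: "f0 (f0 (b n)) < c" "c < f0 (f0 (d n))" using good_lt_fix[OF gf0 ac(3) j1(1)] good_gt_fix[OF gf0 ac(3) j1(2)] by auto
      have nJ: "\<forall>y. f0 (b n) < y \<and> y < f0 (d n) \<longrightarrow> g y \<noteq> y"
        using nofix[OF gg gu c1 oJ[OF n1(2)] j1 gc] .
      have nK: "\<forall>y. f0 (f0 (b n)) < y \<and> y < f0 (f0 (d n)) \<longrightarrow> g y \<noteq> y"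
        using nofix[OF gg gv c2 oK[OF n1(2)] k1 gc] .
      have eq: "f0 (b n) = f0 (f0 (b n)) \<and> f0 (d n) = f0 (f0 (d n))"
        using endeq[OF j1 k1 _ _ _ _ nJ nK] gJ[OF n1(2)] gK[OF n1(2)] by blast
      have fb: "f0 (b n) = b n" "f0 (d n) = d n" using eq gf0 by (simp_all add: good_eq)
      show False
      proof (cases "n = 1")
        case True
        define z where "z = (a + c)/2"
        have z: "a < z" "z < c" using ac by (auto simp: z_def)
        have "f0 z \<noteq> z" using decx[OF z] by simp
        have o1: "orb f1 a (d 1)" using oI[OF n1(1)] b1a by simp
        have fb1: "f0 a = a" "f0 (d 1) = d 1" using fb True b1a by auto
        show False using hard[OF gf0 gf1 g_def u_def vd' c1 c2 o1 fb1 ac(1) _ ac(3) gc z(1) _ \<open>f0 z \<noteq> z\<close>]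
          2 True z by simp
      next
        case False
        then show False using decx[OF bna[OF False] bnc] fb by simp
      qed
    qed
  qed
  have d1c: "d 1 < c" using dmono[OF n1(1)] dnc by simp
  have ad1: "a < d 1" using meet[OF n1(1)] by simp
  define s where "s = f0 (d 1)"
  have s: "a < s" "s < d 1" using decx[OF ad1 d1c] by (simp_all add: s_def)
  have fs: "f0 s < s" "a < f0 s" using decx[of s] s d1c by auto
  have oJ1: "orb u a s" using oJ[OF n1(1)] b1a ac by (simp add: s_def)
  have gfs: "g (f0 s) = f0 s" using gK[OF n1(1)] by (simp add: s_def)
  have ga: "g a = a" using gJ[OF n1(1)] b1a ac by simp
  have gs: "g s = s" using gJ[OF n1(1)] by (simp add: s_def)
  have cl1: "\<forall>x. a < x \<and> x < s \<longrightarrow> g (u x) = u (g x)" using c1 by blast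
  have gid: "\<forall>x\<in>{a..s}. g x = x"
  proof
    fix x assume x: "x \<in> {a..s}"
    show "g x = x"
    proof (cases "x = a \<or> x = s")
      case True then show ?thesis using ga gs by auto
    next
      case False
      then have "a < x" "x < s" using x by auto
      then show ?thesis using fixid[OF gu oJ1 gg ga cl1 fs(2) fs(1) gfs] by simp
    qed
  qed
  have agr: "\<forall>x\<in>{a..s}. f0 x = f1 x" using gid gfix by simp
  have part2: "\<exists>\<rho>>a. \<forall>x\<in>{a..\<rho>}. f0 x = f1 x" using agr s(1) by blast
  have s1: "s \<in> {a..1}" using s d1c c1le by simp
  have part4: "\<forall>\<rho>. (\<rho> \<in> {a..1} \<and> (\<forall>x\<in>{a..\<rho>}. f0 x = f1 x) \<and>
              (\<forall>\<sigma>\<in>{a..1}. (\<forall>x\<in>{a..\<sigma>}. f0 x = f1 x) \<longrightarrow> \<sigma> \<le> \<rho>))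
            \<longrightarrow> f0 (d 1) \<le> \<rho>"
  proof (intro allI impI)
    fix r assume h: "r \<in> {a..1} \<and> (\<forall>x\<in>{a..r}. f0 x = f1 x) \<and>
              (\<forall>\<sigma>\<in>{a..1}. (\<forall>x\<in>{a..\<sigma>}. f0 x = f1 x) \<longrightarrow> \<sigma> \<le> r)"
    then have "s \<le> r" using s1 agr by blast
    then show "f0 (d 1) \<le> r" by (simp add: s_def)
  qed
  have short: "\<And>k. 2 \<le> k \<Longrightarrow> k \<le> n \<Longrightarrow> f0 (d k) \<le> b k"
  proof (rule ccontr)
    fix k assume k: "2 \<le> k" "k \<le> n" and nk: "\<not> f0 (d k) \<le> b k"
    have ki: "k \<in> {1..n}" using k by simp
    have abk: "a < b k" using ord[of 1 k] k bd[OF n1(1)] b1a by simp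
    have bkc: "b k < c" using meet[OF ki] by simp
    have dkc: "d k < c" using dmono[OF ki] dnc by simp
    have adk: "a < d k" using meet[OF ki] by simp
    have bkd: "b k < f0 (d k)" using nk by simp
    have p1: "f0 (b k) < f0 (f0 (d k))" using bkd gf0 by (simp add: good_less)
    have p2: "f0 (f0 (d k)) < f0 (d k)" using decx[OF adk dkc] gf0 by (simp add: good_less)
    have p3: "f0 (b k) < b k" using decx[OF abk bkc] by simp
    have cl: "\<forall>x. f0 (b k) < x \<and> x < f0 (d k) \<longrightarrow> g (u x) = u (g x)" using c1 by blast
    have "g (b k) = b k"
      using fixid[OF gu oJ[OF ki] gg _ cl p1 _ _ p3 bkd] gJ[OF ki] gK[OF ki] p2 by blast
    moreover have "f1 (b k) = b k" using oI[OF ki] unfolding orb_def by simp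
    ultimately show False using gmove[OF abk bkc] by simp
  qed
  have f1R: "\<And>x. d n < x \<Longrightarrow> x < c \<Longrightarrow> f1 x = x"
  proof (rule ccontr)
    fix x assume x: "d n < x" "x < c" "f1 x \<noteq> x"
    have "a < x" using meet[OF n1(2)] x by simp
    then obtain i where i: "i \<in> {1..n}" "b i < x" "x < d i" using cover x by blast
    then show False using dmono[OF i(1)] x by simp
  qed
  have f1c: "f1 c = c"
  proof -
    obtain e where e: "e > 0" "affon f1 (c-e) c" using gf1 unfolding good_def LA_def by blast
    define m where "m = max (d n) (c-e)"
    have m: "m < c" "d n \<le> m" "c - e \<le> m" using dnc e(1) by (auto simp: m_def)
    define y where "y = m + (c - m)/3"
    define z where "z = m + 2*(c - m)/3"
    have yz: "d n < y" "y < z" "z < c" "c - e \<le> y"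
    proof -
      show "d n < y" using m unfolding y_def by (simp add: field_simps)
      show "y < z" using m unfolding y_def z_def by (simp add: field_simps)
      show "z < c" using m unfolding z_def by (simp add: field_simps)
      show "c - e \<le> y" using m unfolding y_def by (simp add: field_simps)
    qed
    have "\<forall>x. c - e \<le> x \<and> x \<le> c \<longrightarrow> f1 x = x"
      using aff_two_fixed[OF e(2), of y z] yz f1R[of y] f1R[of z] by simp
    then show ?thesis using e(1) by simp
  qed
  have gc: "g c = c" using gfix ac f1c by simp
  define w where "w = inv f0 (d n)"
  have fw: "f0 w = d n" using gf0 by (simp add: w_def good_f_inv)
  have adn: "a < d n" using meet[OF n1(2)] by simp
  have w1: "f0 a < f0 w" "f0 w < f0 c" using fw adn dnc ac by simp_all
  have w: "a < w" "w < c" using w1 gf0 by (simp_all add: good_less)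
  have nfR: "\<And>x. w < x \<Longrightarrow> x < c \<Longrightarrow> g x \<noteq> x"
  proof -
    fix x assume x: "w < x" "x < c"
    have "f0 w < f0 x" "f0 x < f0 c" using x gf0 by (simp_all add: good_less)
    then have "d n < f0 x" "f0 x < c" using fw ac by simp_all
    then have "f1 (f0 x) = f0 x" using f1R by simp
    then have "inv f1 (f1 (f0 x)) = inv f1 (f0 x)" by simp
    then have "g x = f0 x" using gf1 by (simp add: g_def good_inv_f)
    then show "g x \<noteq> x" using decx[of x] x w by simp
  qed
  define S where "S = {x. a \<le> x \<and> x \<le> w} \<inter> {x. g x = x}"
  have Sc: "closed S"
  proof -
    have "S = {a..w} \<inter> {x. g x = id x}" by (auto simp: S_def)
    moreover have "closed {x. g x = id x}" using closed_Collect_eq[OF good_cont[OF gg] continuous_on_id] by simp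
    ultimately show ?thesis by (simp add: closed_Int)
  qed
  have aS: "a \<in> S" using ga w by (simp add: S_def)
  have Sb: "bdd_above S" unfolding S_def by (rule bdd_aboveI[of _ w]) auto
  define Q where "Q = Sup S"
  have QS: "Q \<in> S" using closed_contains_Sup[OF _ Sb Sc] aS by (auto simp: Q_def)
  have Q: "a \<le> Q" "Q \<le> w" "g Q = Q" using QS by (auto simp: S_def)
  have nfQ: "\<forall>x. Q < x \<and> x < c \<longrightarrow> g x \<noteq> x"
  proof (intro allI impI notI)
    fix x assume x: "Q < x \<and> x < c" and gx: "g x = x"
    show False
    proof (cases "x \<le> w")
      case True
      then have "x \<in> S" using x Q gx by (simp add: S_def)
      then have "x \<le> Q" using Sb by (simp add: Q_def cSup_upper)
      then show False using x by simp
    next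
      case False then show False using nfR[of x] x gx by simp
    qed
  qed
  have oG: "orb g Q c" using Q w nfQ gc unfolding orb_def by auto
  have c1': "\<forall>x. u (g x) = g (u x)" using c1 by simp
  have uQ: "u Q = Q" using op[OF gu gg c1' oG] by simp
  have fdnc: "f0 (d n) < c" using decx[OF adn dnc] dnc by simp
  have uR: "\<And>x. f0 (d n) < x \<Longrightarrow> x < c \<Longrightarrow> u x = x"
  proof -
    fix x assume x: "f0 (d n) < x" "x < c"
    have "f0 (d n) < f0 (inv f0 x)" "f0 (inv f0 x) < f0 c" using x gf0 ac by (simp_all add: good_f_inv)
    then have "d n < inv f0 x" "inv f0 x < c" using gf0 by (simp_all add: good_less)
    then have "f1 (inv f0 x) = inv f0 x" using f1R by simp
    then show "u x = x" using gf0 by (simp add: u_def good_f_inv)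
  qed
  define y0 where "y0 = (max Q (f0 (d n)) + c)/2"
  have y0: "Q < y0" "y0 < c" "f0 (d n) < y0" using Q w fdnc by (auto simp: y0_def)
  have uy0: "u y0 = y0" using uR y0 by simp
  have clu: "\<forall>x. Q < x \<and> x < c \<longrightarrow> u (g x) = g (u x)" using c1 by simp
  have uid: "\<forall>x. Q < x \<and> x < c \<longrightarrow> u x = x"
    using fixid[OF gg oG gu uQ clu y0(1,2) uy0] by blast
  have fdnQ: "f0 (d n) \<le> Q"
  proof (rule ccontr)
    assume "\<not> f0 (d n) \<le> Q"
    then have qd: "Q < f0 (d n)" by simp
    have jn: "f0 (b n) < f0 (d n)" using oJ[OF n1(2)] unfolding orb_def by simp
    define x where "x = (max Q (f0 (b n)) + f0 (d n))/2"
    have x: "Q < x" "f0 (b n) < x" "x < f0 (d n)" using qd jn by (auto simp: x_def)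
    have "u x \<noteq> x" using oJ[OF n1(2)] x unfolding orb_def by blast
    moreover have "u x = x" using uid x fdnc by simp
    ultimately show False by simp
  qed
  have Qd1: "Q < d 1"
  proof (cases "Q = a")
    case True then show ?thesis using ad1 by simp
  next
    case False
    then have aQ: "a < Q" using Q by simp
    have Qc: "Q < c" using Q w by simp
    have fQ: "f0 Q = f1 Q" using Q gfix by simp
    have "f1 Q \<noteq> Q" using fQ decx[OF aQ Qc] by simp
    then obtain k where k: "k \<in> {1..n}" "b k < Q" "Q < d k" using cover aQ Qc by blast
    show ?thesis
    proof (cases "k = 1")
      case True then show ?thesis using k by simp
    next
      case False
      then have k2: "2 \<le> k" "k \<le> n" using k by auto
      have "f1 (b k) < f1 Q" using k gf1 by (simp add: good_less)
      then have "b k < f0 Q" using oI[OF k(1)] fQ unfolding orb_def by simp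
      moreover have "f0 Q < f0 (d k)" using k gf0 by (simp add: good_less)
      ultimately show ?thesis using short[OF k2] by simp
    qed
  qed
  have part5: "f0 (d n) < d 1" using fdnQ Qd1 by simp
  show ?thesis
  proof (intro conjI)
    show "d n < c" by (rule dnc)
    show "\<exists>\<rho>>a. \<forall>x\<in>{a..\<rho>}. f0 x = f1 x" by (rule part2)
    show "b 1 = a" by (rule b1a)
    show "f0 (d n) < d 1" by (rule part5)
  qed (rule part4)
qed


end
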